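(* Let $L,B>0$ satisfy $$2A^2:=\pi^2\Big[\frac{3}{L^2}+\frac{1}{4B^2}\Big]-1>0,$$ and let $u_0$ satisfy $$\|u_0\|^2<\frac{A^2}{2\pi^2\big(\frac{1}{L^2}+\frac{1}{4B^2}\big)}.$$ Suppose $u\in L^\infty(0,\infty;H^1_0(\Omega))$ is a solution of $$u_t+u_x+u^2u_x+u_{xxx}+u_{xyy}=0\text{ in }\Omega\times(0,\infty),\quad u(x,\pm B,t)=0,\quad u(0,y,t)=u(L,y,t)=u_x(L,y,t)=0,\quad u(\cdot,0)=u_0,$$ regular enough that multiplying the equation by $u$ and by $(1+x)u$ and integrating by parts over $\Omega$ is justified. Then for all $t\ge0$, $$\|u\|^2(t)\le\big(1+x,u^2\big)(t)\le e^{-\frac{A^2}{1+L}t}\big(1+x,u_0^2\big).$$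
   Context: $\Omega=(0,L)\times(-B,B)$, $\|\cdot\|$ is the $L^2(\Omega)$ norm, and $\big(1+x,w^2\big)(t):=\int_\Omega(1+x)\,w^2(x,y,t)\,dx\,dy$. *)

theory Defs
  imports "HOL-Analysis.Analysis"
begin

definition spacetime :: "real \<Rightarrow> real \<Rightarrow> (real \<times> real \<times> real) set" where
  "spacetime L B = {0..L} \<times> {-B..B} \<times> {0..}"

definition jointly :: "(real \<Rightarrow> real \<Rightarrow> real \<Rightarrow> real) \<Rightarrow> real \<times> real \<times> real \<Rightarrow> real" where
  "jointly f = (\<lambda>(x, y, t). f x y t)"

text \<open>L2 inner products over Omega = (0,L) x (-B,B) (boundary has measure zero, so
  the closed rectangle is used): the squared norm and the weighted quantity (1+x, w^2).\<close>

definition sqnorm :: "real \<Rightarrow> real \<Rightarrow> (real \<Rightarrow> real \<Rightarrow> real) \<Rightarrow> real" where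
  "sqnorm L B w = integral ({0..L} \<times> {-B..B}) (\<lambda>(x, y). (w x y)\<^sup>2)"

definition wnorm :: "real \<Rightarrow> real \<Rightarrow> (real \<Rightarrow> real \<Rightarrow> real) \<Rightarrow> real" where
  "wnorm L B w = integral ({0..L} \<times> {-B..B}) (\<lambda>(x, y). (1 + x) * (w x y)\<^sup>2)"

text \<open>All partial derivatives used in the energy identities exist (one-sided at the
  boundary) and are jointly continuous on the closed space-time domain; the mixed
  derivative u_xy is the same whether taken as d/dy u_x or d/dx u_y.\<close>

definition mzk_solution ::
  "real \<Rightarrow> real \<Rightarrow> (real \<Rightarrow> real \<Rightarrow> real \<Rightarrow> real) \<Rightarrow> (real \<Rightarrow> real \<Rightarrow> real) \<Rightarrow> bool" where
  "mzk_solution L B u u0 \<longleftrightarrow>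
    (\<exists>ux uxx uxxx uy uyy uxy uxyy ut :: real \<Rightarrow> real \<Rightarrow> real \<Rightarrow> real.
      (\<forall>f \<in> {u, ux, uxx, uxxx, uy, uyy, uxy, uxyy, ut}. continuous_on (spacetime L B) (jointly f)) \<and>
      (\<forall>x y t. (x, y, t) \<in> spacetime L B \<longrightarrow>
         ((\<lambda>s. u s y t) has_real_derivative ux x y t) (at x within {0..L}) \<and>
         ((\<lambda>s. ux s y t) has_real_derivative uxx x y t) (at x within {0..L}) \<and>
         ((\<lambda>s. uxx s y t) has_real_derivative uxxx x y t) (at x within {0..L}) \<and>
         ((\<lambda>s. u x s t) has_real_derivative uy x y t) (at y within {-B..B}) \<and>
         ((\<lambda>s. uy x s t) has_real_derivative uyy x y t) (at y within {-B..B}) \<and>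
         ((\<lambda>s. ux x s t) has_real_derivative uxy x y t) (at y within {-B..B}) \<and>
         ((\<lambda>s. uy s y t) has_real_derivative uxy x y t) (at x within {0..L}) \<and>
         ((\<lambda>s. uyy s y t) has_real_derivative uxyy x y t) (at x within {0..L}) \<and>
         ((\<lambda>s. u x y s) has_real_derivative ut x y t) (at t within {0..})) \<and>
      (\<forall>x y t. 0 < x \<and> x < L \<and> -B < y \<and> y < B \<and> 0 < t \<longrightarrow>
         ut x y t + ux x y t + (u x y t)\<^sup>2 * ux x y t + uxxx x y t + uxyy x y t = 0) \<and>
      (\<forall>x t. 0 \<le> x \<and> x \<le> L \<and> 0 \<le> t \<longrightarrow> u x (-B) t = 0 \<and> u x B t = 0) \<and>
      (\<forall>y t. -B \<le> y \<and> y \<le> B \<and> 0 \<le> t \<longrightarrow> u 0 y t = 0 \<and> u L y t = 0 \<and> ux L y t = 0) \<and>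
      (\<forall>x y. 0 \<le> x \<and> x \<le> L \<and> -B \<le> y \<and> y \<le> B \<longrightarrow> u x y 0 = u0 x y) \<and>
      (\<exists>C. \<forall>t\<ge>0. sqnorm L B (\<lambda>x y. u x y t) + sqnorm L B (\<lambda>x y. ux x y t)
                    + sqnorm L B (\<lambda>x y. uy x y t) \<le> C))"

end

theory Submission
  imports Defs
begin


lemma deriv_cont_on:
  fixes f f' :: "real \<Rightarrow> real"
  assumes "\<forall>x\<in>S. (f has_real_derivative f' x) (at x within S)"
  shows "continuous_on S f"
  using assms by (meson DERIV_continuous continuous_at_imp_continuous_on continuous_on_eq_continuous_within)

lemma cot_deriv:
  fixes g :: "real \<Rightarrow> real"
  assumes "(g has_real_derivative k) (at x within S)" "sin (g x) \<noteq> 0"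
  shows "((\<lambda>x. k * cos (g x) / sin (g x)) has_real_derivative -(k\<^sup>2 + (k * cos (g x) / sin (g x))\<^sup>2)) (at x within S)"
  using assms by (auto intro!: derivative_eq_intros simp: field_simps power2_eq_square)

lemma wirtinger_k:
  fixes f f' :: "real \<Rightarrow> real" and a b k :: real
  assumes ab: "a < b" and fd: "\<forall>x\<in>{a..b}. (f has_real_derivative f' x) (at x within {a..b})"
    and cf': "continuous_on {a..b} f'" and fa: "f a = 0" and fb: "f b = 0"
    and k: "0 < k" "k < pi/(b-a)"
  shows "k\<^sup>2 * integral {a..b} (\<lambda>x. (f x)\<^sup>2) \<le> integral {a..b} (\<lambda>x. (f' x)\<^sup>2)"
proof -
  define \<alpha> where "\<alpha> = (pi - k*(b-a))/2"
  have kba: "k*(b-a) < pi" using k ab by (simp add: field_simps)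
  have \<alpha>pos: "0 < \<alpha>" using kba by (simp add: \<alpha>_def)
  define th where "th x = k*(x-a) + \<alpha>" for x
  have thr: "0 < th x \<and> th x < pi" if "x \<in> {a..b}" for x
  proof -
    have "k*(x-a) \<ge> 0" "k*(x-a) \<le> k*(b-a)" using that k by (auto intro: mult_left_mono)
    moreover have "th x = k*(x-a) + (pi - k*(b-a))/2" unfolding th_def \<alpha>_def by simp
    ultimately show ?thesis using kba by (simp add: field_simps)
  qed
  have sinpos: "sin (th x) > 0" if "x \<in> {a..b}" for x using thr[OF that] by (simp add: sin_gt_zero)
  define \<phi> where "\<phi> x = k * cos (th x) / sin (th x)" for x
  define D where "D x = -(k\<^sup>2 + (\<phi> x)\<^sup>2) * (f x)\<^sup>2 + 2 * \<phi> x * f x * f' x" for x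
  have cf: "continuous_on {a..b} f" using deriv_cont_on[OF fd] .
  have cth: "continuous_on {a..b} th" unfolding th_def by (intro continuous_intros)
  have csin: "continuous_on {a..b} (\<lambda>x. sin (th x))" "continuous_on {a..b} (\<lambda>x. cos (th x))"
    by (intro continuous_intros cth)+
  have cphi: "continuous_on {a..b} \<phi>" unfolding \<phi>_def
    using sinpos cth by (intro continuous_intros csin) force+
  have Dint: "(D has_integral (\<phi> b * (f b)\<^sup>2 - \<phi> a * (f a)\<^sup>2)) {a..b}"
  proof (rule fundamental_theorem_of_calculus[OF less_imp_le[OF ab]])
    fix x assume x: "x \<in> {a..b}"
    have s: "sin (th x) \<noteq> 0" using sinpos[OF x] by simp
    have dth: "(th has_real_derivative k) (at x within {a..b})"
      unfolding th_def by (auto intro!: derivative_eq_intros)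
    have dphi: "(\<phi> has_real_derivative -(k\<^sup>2 + (\<phi> x)\<^sup>2)) (at x within {a..b})"
      unfolding \<phi>_def[abs_def] using cot_deriv[OF dth s] by simp
    have "((\<lambda>x. \<phi> x * (f x)\<^sup>2) has_real_derivative D x) (at x within {a..b})"
      unfolding D_def using fd x
      by (auto intro!: derivative_eq_intros dphi simp: power2_eq_square algebra_simps)
    then show "((\<lambda>x. \<phi> x * (f x)\<^sup>2) has_vector_derivative D x) (at x within {a..b})"
      by (simp add: has_real_derivative_iff_has_vector_derivative)
  qed
  then have D0: "integral {a..b} D = 0" using fa fb by (simp add: integral_unique)
  have i1: "(\<lambda>x. (f x)\<^sup>2) integrable_on {a..b}" by (intro integrable_continuous_interval continuous_intros cf)
  have i2: "(\<lambda>x. (f' x)\<^sup>2) integrable_on {a..b}" by (intro integrable_continuous_interval continuous_intros cf')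
  have i3: "(\<lambda>x. (f' x - \<phi> x * f x)\<^sup>2) integrable_on {a..b}"
    by (intro integrable_continuous_interval continuous_intros cf' cf cphi)
  have iD: "D integrable_on {a..b}" using Dint by blast
  have pw: "(f' x - \<phi> x * f x)\<^sup>2 = (f' x)\<^sup>2 - k\<^sup>2 * (f x)\<^sup>2 - D x" for x
    unfolding D_def by (simp add: power2_eq_square algebra_simps)
  have "0 \<le> integral {a..b} (\<lambda>x. (f' x - \<phi> x * f x)\<^sup>2)"
    by (rule integral_nonneg[OF i3]) simp
  also have "\<dots> = integral {a..b} (\<lambda>x. (f' x)\<^sup>2 - k\<^sup>2 * (f x)\<^sup>2 - D x)" by (simp add: pw)
  also have "\<dots> = integral {a..b} (\<lambda>x. (f' x)\<^sup>2) - k\<^sup>2 * integral {a..b} (\<lambda>x. (f x)\<^sup>2) - integral {a..b} D"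
  proof -
    have i4: "(\<lambda>x. k\<^sup>2 * (f x)\<^sup>2) integrable_on {a..b}" using i1 by (rule integrable_on_mult_right)
    have "integral {a..b} (\<lambda>x. (f' x)\<^sup>2 - k\<^sup>2 * (f x)\<^sup>2 - D x)
        = integral {a..b} (\<lambda>x. (f' x)\<^sup>2 - k\<^sup>2 * (f x)\<^sup>2) - integral {a..b} D"
      by (rule integral_diff[OF integrable_diff[OF i2 i4] iD])
    moreover have "integral {a..b} (\<lambda>x. (f' x)\<^sup>2 - k\<^sup>2 * (f x)\<^sup>2)
        = integral {a..b} (\<lambda>x. (f' x)\<^sup>2) - integral {a..b} (\<lambda>x. k\<^sup>2 * (f x)\<^sup>2)"
      by (rule integral_diff[OF i2 i4])
    ultimately show ?thesis by simp
  qed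
  finally show ?thesis using D0 by simp
qed

lemma wirtinger:
  fixes f f' :: "real \<Rightarrow> real" and a b :: real
  assumes ab: "a < b" and fd: "\<forall>x\<in>{a..b}. (f has_real_derivative f' x) (at x within {a..b})"
    and cf': "continuous_on {a..b} f'" and fa: "f a = 0" and fb: "f b = 0"
  shows "(pi/(b-a))\<^sup>2 * integral {a..b} (\<lambda>x. (f x)\<^sup>2) \<le> integral {a..b} (\<lambda>x. (f' x)\<^sup>2)"
proof -
  define c where "c = pi/(b-a)"
  have c0: "0 < c" using ab by (simp add: c_def)
  have lim: "((\<lambda>k. k\<^sup>2 * integral {a..b} (\<lambda>x. (f x)\<^sup>2)) \<longlongrightarrow> c\<^sup>2 * integral {a..b} (\<lambda>x. (f x)\<^sup>2)) (at_left c)"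
    by (intro tendsto_intros)
  have ev: "eventually (\<lambda>k. k\<^sup>2 * integral {a..b} (\<lambda>x. (f x)\<^sup>2) \<le> integral {a..b} (\<lambda>x. (f' x)\<^sup>2)) (at_left c)"
    using eventually_at_left_real[OF c0]
    by (rule eventually_mono) (use wirtinger_k[OF ab fd cf' fa fb] c_def in auto)
  show ?thesis
    using tendsto_le[OF trivial_limit_at_left_real tendsto_const lim ev] by (simp add: c_def)
qed



lemma rect_cbox: "{0..L} \<times> {-B..B} = cbox (0::real, -B) (L::real, B::real)"
  unfolding cbox_Pair_eq by auto

lemma int_lin6:
  fixes f1 f2 f3 f4 f5 f6 :: "'a::euclidean_space \<Rightarrow> real"
  assumes "f1 integrable_on S" "f2 integrable_on S" "f3 integrable_on S"
    "f4 integrable_on S" "f5 integrable_on S" "f6 integrable_on S"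
  shows "integral S (\<lambda>z. c1 * f1 z + c2 * f2 z + c3 * f3 z + c4 * f4 z + c5 * f5 z + c6 * f6 z)
    = c1 * integral S f1 + c2 * integral S f2 + c3 * integral S f3 + c4 * integral S f4
      + c5 * integral S f5 + c6 * integral S f6"
  using assms by (simp add: integral_add integrable_add integrable_on_mult_right)

lemma fub_x:
  fixes g :: "real \<Rightarrow> real \<Rightarrow> real"
  assumes "continuous_on ({0..L} \<times> {-B..B}) (\<lambda>z. g (fst z) (snd z))"
  shows "integral ({0..L} \<times> {-B..B}) (\<lambda>(x,y). g x y) = integral {0..L} (\<lambda>x. integral {-B..B} (\<lambda>y. g x y))"
proof -
  have "continuous_on (cbox (0, -B) (L, B)) (\<lambda>(x,y). g x y)"
    using assms by (simp add: rect_cbox case_prod_beta')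
  from integral_prod_continuous[OF this] show ?thesis by (simp add: rect_cbox)
qed

lemma fub_y:
  fixes g :: "real \<Rightarrow> real \<Rightarrow> real"
  assumes "continuous_on ({0..L} \<times> {-B..B}) (\<lambda>z. g (fst z) (snd z))"
  shows "integral ({0..L} \<times> {-B..B}) (\<lambda>(x,y). g x y) = integral {-B..B} (\<lambda>y. integral {0..L} (\<lambda>x. g x y))"
proof -
  have c: "continuous_on (cbox (0, -B) (L, B)) (\<lambda>(x,y). g x y)"
    using assms by (simp add: rect_cbox case_prod_beta')
  from fub_x[OF assms] integral_swap_continuous[OF c] show ?thesis by simp
qed

lemma rect_integrable:
  fixes g :: "real \<times> real \<Rightarrow> real"
  assumes "continuous_on ({0..L} \<times> {-B..B}) g"
  shows "g integrable_on ({0..L} \<times> {-B..B})"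
  using assms unfolding rect_cbox by (rule integrable_continuous)

lemma int_dx:
  fixes P P' :: "real \<Rightarrow> real \<Rightarrow> real"
  assumes L: "0 \<le> L" and c: "continuous_on ({0..L} \<times> {-B..B}) (\<lambda>z. P' (fst z) (snd z))"
    and d: "\<And>x y. x \<in> {0..L} \<Longrightarrow> y \<in> {-B..B} \<Longrightarrow> ((\<lambda>s. P s y) has_real_derivative P' x y) (at x within {0..L})"
  shows "integral ({0..L} \<times> {-B..B}) (\<lambda>(x,y). P' x y) = integral {-B..B} (\<lambda>y. P L y - P 0 y)"
proof -
  have "integral {0..L} (\<lambda>x. P' x y) = P L y - P 0 y" if y: "y \<in> {-B..B}" for y
    using d[OF _ y] L
    by (intro integral_unique fundamental_theorem_of_calculus) (auto simp: has_real_derivative_iff_has_vector_derivative)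
  then show ?thesis using fub_y[OF c] by (auto intro: integral_cong)
qed

lemma int_dy:
  fixes P P' :: "real \<Rightarrow> real \<Rightarrow> real"
  assumes B: "0 \<le> B" and c: "continuous_on ({0..L} \<times> {-B..B}) (\<lambda>z. P' (fst z) (snd z))"
    and d: "\<And>x y. x \<in> {0..L} \<Longrightarrow> y \<in> {-B..B} \<Longrightarrow> ((\<lambda>s. P x s) has_real_derivative P' x y) (at y within {-B..B})"
  shows "integral ({0..L} \<times> {-B..B}) (\<lambda>(x,y). P' x y) = integral {0..L} (\<lambda>x. P x B - P x (-B))"
proof -
  have "integral {-B..B} (\<lambda>y. P' x y) = P x B - P x (-B)" if x: "x \<in> {0..L}" for x
    using d[OF x] B
    by (intro integral_unique fundamental_theorem_of_calculus) (auto simp: has_real_derivative_iff_has_vector_derivative)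
  then show ?thesis using fub_x[OF c] by (auto intro: integral_cong)
qed

lemma deriv_zero_within:
  fixes f :: "real \<Rightarrow> real"
  assumes "a < b" "x \<in> {a..b}" "\<And>s. s \<in> {a..b} \<Longrightarrow> f s = 0"
    and "(f has_real_derivative D) (at x within {a..b})"
  shows "D = 0"
proof -
  have "(f has_real_derivative 0) (at x within {a..b})"
    by (rule has_field_derivative_transform_within[OF DERIV_const[of 0] zero_less_one assms(2)]) (use assms(3) in auto)
  then show ?thesis using assms(1,2,4)
    by (intro vector_derivative_unique_within_closed_interval[of a b x f])
       (auto simp: has_real_derivative_iff_has_vector_derivative)
qed



locale spat =
  fixes L B :: real and U Ux Uxx Uxxx Uy Uyy Uxy Uxyy :: "real \<Rightarrow> real \<Rightarrow> real"
  assumes L: "0 < L" and B: "0 < B"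
    and cont: "\<And>V. V \<in> {U, Ux, Uxx, Uxxx, Uy, Uyy, Uxy, Uxyy} \<Longrightarrow>
        continuous_on ({0..L} \<times> {-B..B}) (\<lambda>z. V (fst z) (snd z))"
    and dx: "\<And>x y. x \<in> {0..L} \<Longrightarrow> y \<in> {-B..B} \<Longrightarrow> ((\<lambda>s. U s y) has_real_derivative Ux x y) (at x within {0..L})"
    and dxx: "\<And>x y. x \<in> {0..L} \<Longrightarrow> y \<in> {-B..B} \<Longrightarrow> ((\<lambda>s. Ux s y) has_real_derivative Uxx x y) (at x within {0..L})"
    and dxxx: "\<And>x y. x \<in> {0..L} \<Longrightarrow> y \<in> {-B..B} \<Longrightarrow> ((\<lambda>s. Uxx s y) has_real_derivative Uxxx x y) (at x within {0..L})"
    and dy: "\<And>x y. x \<in> {0..L} \<Longrightarrow> y \<in> {-B..B} \<Longrightarrow> ((\<lambda>s. U x s) has_real_derivative Uy x y) (at y within {-B..B})"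
    and dyy: "\<And>x y. x \<in> {0..L} \<Longrightarrow> y \<in> {-B..B} \<Longrightarrow> ((\<lambda>s. Uy x s) has_real_derivative Uyy x y) (at y within {-B..B})"
    and dxy1: "\<And>x y. x \<in> {0..L} \<Longrightarrow> y \<in> {-B..B} \<Longrightarrow> ((\<lambda>s. Ux x s) has_real_derivative Uxy x y) (at y within {-B..B})"
    and dxy2: "\<And>x y. x \<in> {0..L} \<Longrightarrow> y \<in> {-B..B} \<Longrightarrow> ((\<lambda>s. Uy s y) has_real_derivative Uxy x y) (at x within {0..L})"
    and dxyy: "\<And>x y. x \<in> {0..L} \<Longrightarrow> y \<in> {-B..B} \<Longrightarrow> ((\<lambda>s. Uyy s y) has_real_derivative Uxyy x y) (at x within {0..L})"
    and bcy: "\<And>x. x \<in> {0..L} \<Longrightarrow> U x (-B) = 0 \<and> U x B = 0"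
    and bcx: "\<And>y. y \<in> {-B..B} \<Longrightarrow> U 0 y = 0 \<and> U L y = 0 \<and> Ux L y = 0"
begin

abbreviation "R \<equiv> {0..L} \<times> {-B..B}"

lemma c_U: "continuous_on R (\<lambda>z. U (fst z) (snd z))" using cont by simp
lemma c_Ux: "continuous_on R (\<lambda>z. Ux (fst z) (snd z))" using cont by simp
lemma c_Uxx: "continuous_on R (\<lambda>z. Uxx (fst z) (snd z))" using cont by simp
lemma c_Uxxx: "continuous_on R (\<lambda>z. Uxxx (fst z) (snd z))" using cont by simp
lemma c_Uy: "continuous_on R (\<lambda>z. Uy (fst z) (snd z))" using cont by simp
lemma c_Uyy: "continuous_on R (\<lambda>z. Uyy (fst z) (snd z))" using cont by simp
lemma c_Uxy: "continuous_on R (\<lambda>z. Uxy (fst z) (snd z))" using cont by simp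
lemma c_Uxyy: "continuous_on R (\<lambda>z. Uxyy (fst z) (snd z))" using cont by simp

lemmas cU = c_U c_Ux c_Uxx c_Uxxx c_Uy c_Uyy c_Uxy c_Uxyy

lemma Uy_bd: "y \<in> {-B..B} \<Longrightarrow> Uy 0 y = 0 \<and> Uy L y = 0"
proof -
  assume y: "y \<in> {-B..B}"
  have "Uy 0 y = 0"
    by (rule deriv_zero_within[of "-B" B y "\<lambda>s. U 0 s"]) (use B y bcx dy L in auto)
  moreover have "Uy L y = 0"
    by (rule deriv_zero_within[of "-B" B y "\<lambda>s. U L s"]) (use B y bcx dy L in auto)
  ultimately show ?thesis by simp
qed

lemma Ux_bd: "x \<in> {0..L} \<Longrightarrow> Ux x (-B) = 0 \<and> Ux x B = 0"
proof -
  assume x: "x \<in> {0..L}"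
  have "Ux x (-B) = 0"
    by (rule deriv_zero_within[of 0 L x "\<lambda>s. U s (-B)"]) (use B x bcy dx L in auto)
  moreover have "Ux x B = 0"
    by (rule deriv_zero_within[of 0 L x "\<lambda>s. U s B"]) (use B x bcy dx L in auto)
  ultimately show ?thesis by simp
qed

definition "E x y = Ux x y + (U x y)\<^sup>2 * Ux x y + Uxxx x y + Uxyy x y"

definition "nn = integral R (\<lambda>(x,y). (U x y)\<^sup>2)"
definition "aa = integral R (\<lambda>(x,y). (Ux x y)\<^sup>2)"
definition "bb = integral R (\<lambda>(x,y). (Uy x y)\<^sup>2)"
definition "QQ = integral R (\<lambda>(x,y). (U x y)^4)"
definition "bd = integral {-B..B} (\<lambda>y. (Ux 0 y)\<^sup>2)"

definition "Phi x y = (1+x)*(U x y)\<^sup>2 + (1+x)*(U x y)^4/2 + 2*(1+x)*U x y*Uxx x y - 2*U x y*Ux x y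
   - (1+x)*(Ux x y)\<^sup>2 + 2*(1+x)*U x y*Uyy x y + (1+x)*(Uy x y)\<^sup>2"
definition "Phi' x y = (U x y)\<^sup>2 + (1+x)*(2*U x y*Ux x y) + (U x y)^4/2 + (1+x)*(4*(U x y)^3*Ux x y)/2
   + 2*U x y*Uxx x y + 2*(1+x)*(Ux x y*Uxx x y + U x y*Uxxx x y) - 2*(Ux x y*Ux x y + U x y*Uxx x y)
   - (Ux x y)\<^sup>2 - (1+x)*(2*Ux x y*Uxx x y) + 2*U x y*Uyy x y + 2*(1+x)*(Ux x y*Uyy x y + U x y*Uxyy x y)
   + (Uy x y)\<^sup>2 + (1+x)*(2*Uy x y*Uxy x y)"
definition "Psi x y = 2*U x y*Uy x y + 2*(1+x)*Ux x y*Uy x y"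
definition "Psi' x y = 2*(Uy x y*Uy x y + U x y*Uyy x y) + 2*(1+x)*(Uxy x y*Uy x y + Ux x y*Uyy x y)"

lemma dPhi: "x \<in> {0..L} \<Longrightarrow> y \<in> {-B..B} \<Longrightarrow> ((\<lambda>s. Phi s y) has_real_derivative Phi' x y) (at x within {0..L})"
  unfolding Phi_def[abs_def] Phi'_def
  by (auto intro!: derivative_eq_intros dx dxx dxxx dxy2 dxyy simp: algebra_simps power2_eq_square power3_eq_cube power4_eq_xxxx)

lemma dPsi: "x \<in> {0..L} \<Longrightarrow> y \<in> {-B..B} \<Longrightarrow> ((\<lambda>s. Psi x s) has_real_derivative Psi' x y) (at y within {-B..B})"
  unfolding Psi_def[abs_def] Psi'_def
  by (auto intro!: derivative_eq_intros dy dyy dxy1 simp: algebra_simps)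

lemma cPhi': "continuous_on R (\<lambda>z. Phi' (fst z) (snd z))"
  unfolding Phi'_def by (intro continuous_intros cU) auto
lemma cPsi': "continuous_on R (\<lambda>z. Psi' (fst z) (snd z))"
  unfolding Psi'_def by (intro continuous_intros cU)

lemma int_Phi': "integral R (\<lambda>(x,y). Phi' x y) = bd"
proof -
  have "integral R (\<lambda>(x,y). Phi' x y) = integral {-B..B} (\<lambda>y. Phi L y - Phi 0 y)"
    using L by (intro int_dx cPhi' dPhi) auto
  also have "\<dots> = bd" unfolding bd_def
    by (rule integral_cong) (use bcx Uy_bd in \<open>auto simp: Phi_def power2_eq_square\<close>)
  finally show ?thesis .
qed

lemma int_Psi': "integral R (\<lambda>(x,y). Psi' x y) = 0"
proof -
  have "integral R (\<lambda>(x,y). Psi' x y) = integral {0..L} (\<lambda>x. Psi x B - Psi x (-B))"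
    using B by (intro int_dy cPsi' dPsi) auto
  also have "\<dots> = 0"
    by (subst integral_cong[where g="\<lambda>x. 0"]) (use bcy Ux_bd in \<open>auto simp: Psi_def\<close>)
  finally show ?thesis .
qed

lemma integ: "continuous_on R (\<lambda>z. (g::real\<Rightarrow>real\<Rightarrow>real) (fst z) (snd z)) \<Longrightarrow> (\<lambda>(x,y). g x y) integrable_on R"
  by (rule rect_integrable) (simp add: case_prod_beta')


lemma ident_w: "integral R (\<lambda>(x,y). 2*(1+x)*U x y*E x y) = bd + 3*aa + bb - nn - QQ/2"
proof -
  have eq: "(\<lambda>(x,y). 2*(1+x)*U x y*E x y) = (\<lambda>z. 1 * (\<lambda>(x,y). Phi' x y) z + (-1) * (\<lambda>(x,y). Psi' x y) z
     + (-1) * (\<lambda>(x,y). (U x y)\<^sup>2) z + (-1/2) * (\<lambda>(x,y). (U x y)^4) z + 3 * (\<lambda>(x,y). (Ux x y)\<^sup>2) z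
     + 1 * (\<lambda>(x,y). (Uy x y)\<^sup>2) z)"
    by (auto simp: fun_eq_iff E_def Phi'_def Psi'_def algebra_simps power2_eq_square power3_eq_cube power4_eq_xxxx)
  have i1: "(\<lambda>(x,y). Phi' x y) integrable_on R" by (rule integ[OF cPhi'])
  have i2: "(\<lambda>(x,y). Psi' x y) integrable_on R" by (rule integ[OF cPsi'])
  have i3: "(\<lambda>(x,y). (U x y)\<^sup>2) integrable_on R" by (rule integ) (intro continuous_intros cU)
  have i4: "(\<lambda>(x,y). (U x y)^4) integrable_on R" by (rule integ) (intro continuous_intros cU)
  have i5: "(\<lambda>(x,y). (Ux x y)\<^sup>2) integrable_on R" by (rule integ) (intro continuous_intros cU)
  have i6: "(\<lambda>(x,y). (Uy x y)\<^sup>2) integrable_on R" by (rule integ) (intro continuous_intros cU)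
  show ?thesis unfolding eq int_lin6[OF i1 i2 i3 i4 i5 i6]
    by (simp add: int_Phi' int_Psi' nn_def aa_def bb_def QQ_def)
qed

definition "Phi0 x y = (U x y)\<^sup>2 + (U x y)^4/2 + 2*U x y*Uxx x y - (Ux x y)\<^sup>2 + 2*U x y*Uyy x y + (Uy x y)\<^sup>2"
definition "Phi0' x y = 2*U x y*Ux x y + (4*(U x y)^3*Ux x y)/2 + 2*(Ux x y*Uxx x y + U x y*Uxxx x y)
   - 2*Ux x y*Uxx x y + 2*(Ux x y*Uyy x y + U x y*Uxyy x y) + 2*Uy x y*Uxy x y"
definition "Psi0 x y = 2*Ux x y*Uy x y"
definition "Psi0' x y = 2*(Uxy x y*Uy x y + Ux x y*Uyy x y)"

lemma dPhi0: "x \<in> {0..L} \<Longrightarrow> y \<in> {-B..B} \<Longrightarrow> ((\<lambda>s. Phi0 s y) has_real_derivative Phi0' x y) (at x within {0..L})"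
  unfolding Phi0_def[abs_def] Phi0'_def
  by (auto intro!: derivative_eq_intros dx dxx dxxx dxy2 dxyy simp: algebra_simps power2_eq_square power3_eq_cube power4_eq_xxxx)

lemma dPsi0: "x \<in> {0..L} \<Longrightarrow> y \<in> {-B..B} \<Longrightarrow> ((\<lambda>s. Psi0 x s) has_real_derivative Psi0' x y) (at y within {-B..B})"
  unfolding Psi0_def[abs_def] Psi0'_def
  by (auto intro!: derivative_eq_intros dy dyy dxy1 simp: algebra_simps)

lemma cPhi0': "continuous_on R (\<lambda>z. Phi0' (fst z) (snd z))"
  unfolding Phi0'_def by (intro continuous_intros cU) auto
lemma cPsi0': "continuous_on R (\<lambda>z. Psi0' (fst z) (snd z))"
  unfolding Psi0'_def by (intro continuous_intros cU)

lemma ident_0: "integral R (\<lambda>(x,y). 2*U x y*E x y) = bd"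
proof -
  have i1: "integral R (\<lambda>(x,y). Phi0' x y) = bd"
  proof -
    have "integral R (\<lambda>(x,y). Phi0' x y) = integral {-B..B} (\<lambda>y. Phi0 L y - Phi0 0 y)"
      using L by (intro int_dx cPhi0' dPhi0) auto
    also have "\<dots> = bd" unfolding bd_def
      by (rule integral_cong) (use bcx Uy_bd in \<open>auto simp: Phi0_def power2_eq_square\<close>)
    finally show ?thesis .
  qed
  have i2: "integral R (\<lambda>(x,y). Psi0' x y) = 0"
  proof -
    have "integral R (\<lambda>(x,y). Psi0' x y) = integral {0..L} (\<lambda>x. Psi0 x B - Psi0 x (-B))"
      using B by (intro int_dy cPsi0' dPsi0) auto
    also have "\<dots> = 0"
      by (subst integral_cong[where g="\<lambda>x. 0"]) (use bcy Ux_bd in \<open>auto simp: Psi0_def\<close>)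
    finally show ?thesis .
  qed
  have eq: "(\<lambda>(x,y). 2*U x y*E x y) = (\<lambda>z. (\<lambda>(x,y). Phi0' x y) z - (\<lambda>(x,y). Psi0' x y) z)"
    by (auto simp: fun_eq_iff E_def Phi0'_def Psi0'_def algebra_simps power2_eq_square power3_eq_cube)
  have "integral R (\<lambda>(x,y). 2*U x y*E x y) = integral R (\<lambda>(x,y). Phi0' x y) - integral R (\<lambda>(x,y). Psi0' x y)"
    unfolding eq by (rule integral_diff; rule integ; intro cPhi0' cPsi0')
  then show ?thesis using i1 i2 by simp
qed

end


lemma slice_x:
  fixes g :: "real \<Rightarrow> real \<Rightarrow> real"
  assumes "continuous_on ({0..L} \<times> {-B..B}) (\<lambda>z. g (fst z) (snd z))" "y \<in> {-B..B}"
  shows "continuous_on {0..L} (\<lambda>x. g x y)"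
proof -
  have "continuous_on {0..L} ((\<lambda>z. g (fst z) (snd z)) \<circ> (\<lambda>x. (x, y)))"
    by (rule continuous_on_compose[OF _ continuous_on_subset[OF assms(1)]]) (use assms(2) in \<open>auto intro!: continuous_intros\<close>)
  then show ?thesis by (simp add: o_def)
qed

lemma slice_y:
  fixes g :: "real \<Rightarrow> real \<Rightarrow> real"
  assumes "continuous_on ({0..L} \<times> {-B..B}) (\<lambda>z. g (fst z) (snd z))" "x \<in> {0..L}"
  shows "continuous_on {-B..B} (\<lambda>y. g x y)"
proof -
  have "continuous_on {-B..B} ((\<lambda>z. g (fst z) (snd z)) \<circ> (\<lambda>y. (x, y)))"
    by (rule continuous_on_compose[OF _ continuous_on_subset[OF assms(1)]]) (use assms(2) in \<open>auto intro!: continuous_intros\<close>)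
  then show ?thesis by (simp add: o_def)
qed

lemma param_x:
  fixes g :: "real \<Rightarrow> real \<Rightarrow> real"
  assumes "continuous_on ({0..L} \<times> {-B..B}) (\<lambda>z. g (fst z) (snd z))"
  shows "continuous_on {0..L} (\<lambda>x. integral {-B..B} (\<lambda>y. g x y))"
proof -
  have "continuous_on ({0..L} \<times> cbox (-B) B) (\<lambda>(x, y). g x y)"
    using assms by (simp add: case_prod_beta' cbox_interval)
  from integral_continuous_on_param[OF this] show ?thesis by (simp add: cbox_interval)
qed

lemma param_y:
  fixes g :: "real \<Rightarrow> real \<Rightarrow> real"
  assumes "continuous_on ({0..L} \<times> {-B..B}) (\<lambda>z. g (fst z) (snd z))"
  shows "continuous_on {-B..B} (\<lambda>y. integral {0..L} (\<lambda>x. g x y))"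
proof -
  have "continuous_on ({-B..B} \<times> {0..L}) ((\<lambda>z. g (fst z) (snd z)) \<circ> prod.swap)"
  proof (rule continuous_on_compose)
    show "continuous_on ({-B..B} \<times> {0..L}) prod.swap" by (intro continuous_intros)
    have "prod.swap ` ({-B..B} \<times> {0..L}) = {0..L} \<times> {-B..B}" by auto
    then show "continuous_on (prod.swap ` ({-B..B} \<times> {0..L})) (\<lambda>z. g (fst z) (snd z))" using assms by simp
  qed
  then have "continuous_on ({-B..B} \<times> cbox 0 L) (\<lambda>(y, x). g x y)"
    by (simp add: case_prod_beta' cbox_interval o_def)
  from integral_continuous_on_param[OF this] show ?thesis by (simp add: cbox_interval)
qed

lemma sq_le_absint:
  fixes f f' :: "real \<Rightarrow> real"
  assumes x: "a \<le> x" "x \<le> b" and fd: "\<forall>s\<in>{a..b}. (f has_real_derivative f' s) (at s within {a..b})"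
    and cf': "continuous_on {a..b} f'" and fa: "f a = 0" and fb: "f b = 0"
  shows "(f x)\<^sup>2 \<le> integral {a..b} (\<lambda>s. \<bar>f s * f' s\<bar>)"
proof -
  have cf: "continuous_on {a..b} f" by (rule deriv_cont_on[OF fd])
  have d: "((\<lambda>s. (f s)\<^sup>2) has_vector_derivative 2 * f s * f' s) (at s within T)"
    if "s \<in> T" "T \<subseteq> {a..b}" for s T
  proof -
    have "(f has_real_derivative f' s) (at s within T)"
      using fd that by (meson DERIV_subset subsetD)
    then have "((\<lambda>s. (f s)\<^sup>2) has_real_derivative 2 * f s * f' s) (at s within T)"
      by (auto intro!: derivative_eq_intros)
    then show ?thesis by (simp add: has_real_derivative_iff_has_vector_derivative)
  qed
  have i1: "((\<lambda>s. 2 * f s * f' s) has_integral ((f x)\<^sup>2 - (f a)\<^sup>2)) {a..x}"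
    by (rule fundamental_theorem_of_calculus[OF x(1)]) (rule d, auto simp: x)
  have i2: "((\<lambda>s. 2 * f s * f' s) has_integral ((f b)\<^sup>2 - (f x)\<^sup>2)) {x..b}"
    by (rule fundamental_theorem_of_calculus[OF x(2)]) (rule d, auto simp: x)
  have ca: "continuous_on {a..b} (\<lambda>s. \<bar>f s * f' s\<bar>)" by (intro continuous_intros cf cf')
  have ia: "(\<lambda>s. \<bar>f s * f' s\<bar>) integrable_on {a..x}" "(\<lambda>s. \<bar>f s * f' s\<bar>) integrable_on {x..b}"
    using x by (auto intro!: integrable_continuous_interval continuous_on_subset[OF ca])
  have "(f x)\<^sup>2 = integral {a..x} (\<lambda>s. 2 * f s * f' s)" using i1 fa by (simp add: integral_unique)
  also have "\<dots> \<le> integral {a..x} (\<lambda>s. 2 * \<bar>f s * f' s\<bar>)"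
  proof (rule integral_le)
    show "(\<lambda>s. 2 * f s * f' s) integrable_on {a..x}" using i1 by blast
    show "(\<lambda>s. 2 * \<bar>f s * f' s\<bar>) integrable_on {a..x}" using ia(1) by (rule integrable_on_mult_right)
    fix s show "2 * f s * f' s \<le> 2 * \<bar>f s * f' s\<bar>" using abs_ge_self[of "f s * f' s"] by (simp add: mult.assoc)
  qed
  finally have A: "(f x)\<^sup>2 \<le> 2 * integral {a..x} (\<lambda>s. \<bar>f s * f' s\<bar>)" by simp
  have "(f x)\<^sup>2 = - integral {x..b} (\<lambda>s. 2 * f s * f' s)" using i2 fb by (simp add: integral_unique)
  also have "\<dots> = integral {x..b} (\<lambda>s. - (2 * f s * f' s))" by simp
  also have "\<dots> \<le> integral {x..b} (\<lambda>s. 2 * \<bar>f s * f' s\<bar>)"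
  proof (rule integral_le)
    show "(\<lambda>s. - (2 * f s * f' s)) integrable_on {x..b}" using integrable_neg[OF has_integral_integrable[OF i2]] by simp
    show "(\<lambda>s. 2 * \<bar>f s * f' s\<bar>) integrable_on {x..b}" using ia(2) by (rule integrable_on_mult_right)
    fix s show "- (2 * f s * f' s) \<le> 2 * \<bar>f s * f' s\<bar>" using abs_ge_minus_self[of "f s * f' s"] by (simp add: mult.assoc)
  qed
  finally have Bq: "(f x)\<^sup>2 \<le> 2 * integral {x..b} (\<lambda>s. \<bar>f s * f' s\<bar>)" by simp
  have "integral {a..x} (\<lambda>s. \<bar>f s * f' s\<bar>) + integral {x..b} (\<lambda>s. \<bar>f s * f' s\<bar>) = integral {a..b} (\<lambda>s. \<bar>f s * f' s\<bar>)"
    by (rule Henstock_Kurzweil_Integration.integral_combine[OF x]) (rule integrable_continuous_interval[OF ca])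
  then show ?thesis using A Bq by linarith
qed

lemma cs_aux:
  fixes I n a :: real
  assumes "0 \<le> I" "0 \<le> n" "0 \<le> a" and h: "\<And>l. l > 0 \<Longrightarrow> I \<le> (l * n + a / l) / 2"
  shows "I\<^sup>2 \<le> n * a"
proof (cases "n > 0 \<and> a > 0")
  case True
  define l where "l = sqrt a / sqrt n"
  have l0: "l > 0" using True by (simp add: l_def)
  have sn: "sqrt n * sqrt n = n" "sqrt a * sqrt a = a" using True by simp_all
  have "l * n = sqrt a * sqrt n" unfolding l_def using True
    by (metis sn(1) divide_eq_eq mult.assoc mult.commute real_sqrt_gt_0_iff order_less_irrefl)
  moreover have "a / l = sqrt a * sqrt n" unfolding l_def using True
    by (metis sn(2) divide_divide_eq_right nonzero_mult_div_cancel_left real_sqrt_gt_0_iff order_less_irrefl times_divide_eq_left)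
  ultimately have "I \<le> sqrt a * sqrt n" using h[OF l0] by simp
  then have "I\<^sup>2 \<le> (sqrt a * sqrt n)\<^sup>2" using assms(1) by (intro power_mono) auto
  then show ?thesis using True by (simp add: power_mult_distrib mult.commute)
next
  case False
  have "I \<le> 0"
  proof (rule ccontr)
    assume I: "\<not> I \<le> 0"
    show False
    proof (cases "n = 0")
      case True
      have "I \<le> (((a+1)/I) * n + a / ((a+1)/I)) / 2" using I assms(3) by (intro h) auto
      also have "\<dots> = a * I / (2 * (a+1))" using True I assms(3) by (simp add: field_simps)
      also have "\<dots> < I"
      proof -
        have "0 < I*(a+2)" using I assms(3) by (intro mult_pos_pos) auto
        then show ?thesis using I assms(3) by (simp add: field_simps algebra_simps)
      qed
      finally show False by simp
    next
      case False
      then have a0: "a = 0" using \<open>\<not> (n > 0 \<and> a > 0)\<close> assms by auto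
      have "I \<le> ((I/(n+1)) * n + a / (I/(n+1))) / 2" using I assms(2) by (intro h) auto
      also have "\<dots> = I * n / (2 * (n+1))" using a0 I assms(2) by (simp add: field_simps)
      also have "\<dots> < I"
      proof -
        have "0 < I*(n+2)" using I assms(2) by (intro mult_pos_pos) auto
        then show ?thesis using I assms(2) by (simp add: field_simps algebra_simps)
      qed
      finally show False by simp
    qed
  qed
  then have "I = 0" using assms(1) by simp
  then show ?thesis using assms by simp
qed



lemma int_lin2:
  fixes f1 f2 :: "'a::euclidean_space \<Rightarrow> real"
  assumes "f1 integrable_on S" "f2 integrable_on S"
  shows "integral S (\<lambda>z. c1 * f1 z + c2 * f2 z) = c1 * integral S f1 + c2 * integral S f2"
  using assms by (simp add: integral_add integrable_on_mult_right)

lemma abs_prod_le: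
  fixes p q l :: real
  assumes "l > 0"
  shows "\<bar>p * q\<bar> \<le> (l * p\<^sup>2 + q\<^sup>2 / l) / 2"
proof -
  have "0 \<le> (l * \<bar>p\<bar> - \<bar>q\<bar>)\<^sup>2" by simp
  then have "2 * l * \<bar>p * q\<bar> \<le> l * (l * p\<^sup>2) + q\<^sup>2"
    by (simp add: power2_eq_square algebra_simps abs_mult)
  then show ?thesis using assms by (simp add: field_simps power2_eq_square)
qed

context spat
begin

lemma cont2: "continuous_on R (\<lambda>z. (V (fst z) (snd z))\<^sup>2)" if "V \<in> {U, Ux, Uy}" for V
  using that by (auto intro!: continuous_intros cU)

lemma nn_ge0: "0 \<le> nn" unfolding nn_def
  by (rule integral_nonneg[OF integ]) (auto intro!: continuous_intros cU)
lemma aa_ge0: "0 \<le> aa" unfolding aa_def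
  by (rule integral_nonneg[OF integ]) (auto intro!: continuous_intros cU)
lemma bb_ge0: "0 \<le> bb" unfolding bb_def
  by (rule integral_nonneg[OF integ]) (auto intro!: continuous_intros cU)
lemma QQ_ge0: "0 \<le> QQ" unfolding QQ_def
  by (rule integral_nonneg[OF integ]) (auto intro!: continuous_intros cU)
lemma bd_ge0: "0 \<le> bd" unfolding bd_def
proof (rule integral_nonneg)
  show "(\<lambda>y. (Ux 0 y)\<^sup>2) integrable_on {- B..B}"
    by (intro integrable_continuous_interval continuous_intros slice_y[OF c_Ux]) (use L in auto)
qed simp

lemma poinc_x: "(pi/L)\<^sup>2 * nn \<le> aa"
proof -
  have e1: "nn = integral {-B..B} (\<lambda>y. integral {0..L} (\<lambda>x. (U x y)\<^sup>2))"
    unfolding nn_def using fub_y[of L B "\<lambda>x y. (U x y)\<^sup>2"] cont2 by simp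
  have e2: "aa = integral {-B..B} (\<lambda>y. integral {0..L} (\<lambda>x. (Ux x y)\<^sup>2))"
    unfolding aa_def using fub_y[of L B "\<lambda>x y. (Ux x y)\<^sup>2"] cont2 by simp
  have "(pi/L)\<^sup>2 * nn = integral {-B..B} (\<lambda>y. (pi/L)\<^sup>2 * integral {0..L} (\<lambda>x. (U x y)\<^sup>2))"
    unfolding e1 by simp
  also have "\<dots> \<le> integral {-B..B} (\<lambda>y. integral {0..L} (\<lambda>x. (Ux x y)\<^sup>2))"
  proof (rule integral_le)
    show "(\<lambda>y. (pi/L)\<^sup>2 * integral {0..L} (\<lambda>x. (U x y)\<^sup>2)) integrable_on {-B..B}"
      by (intro integrable_on_mult_right integrable_continuous_interval param_y) (rule cont2, simp)
    show "(\<lambda>y. integral {0..L} (\<lambda>x. (Ux x y)\<^sup>2)) integrable_on {-B..B}"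
      by (intro integrable_continuous_interval param_y) (rule cont2, simp)
    fix y assume y: "y \<in> {-B..B}"
    show "(pi/L)\<^sup>2 * integral {0..L} (\<lambda>x. (U x y)\<^sup>2) \<le> integral {0..L} (\<lambda>x. (Ux x y)\<^sup>2)"
      using wirtinger[of 0 L "\<lambda>s. U s y" "\<lambda>s. Ux s y"] L dx[OF _ y] slice_x[OF c_Ux y] bcx[OF y] by simp
  qed
  finally show ?thesis using e2 by simp
qed

lemma poinc_y: "(pi/(2*B))\<^sup>2 * nn \<le> bb"
proof -
  have e1: "nn = integral {0..L} (\<lambda>x. integral {-B..B} (\<lambda>y. (U x y)\<^sup>2))"
    unfolding nn_def using fub_x[of L B "\<lambda>x y. (U x y)\<^sup>2"] cont2 by simp
  have e2: "bb = integral {0..L} (\<lambda>x. integral {-B..B} (\<lambda>y. (Uy x y)\<^sup>2))"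
    unfolding bb_def using fub_x[of L B "\<lambda>x y. (Uy x y)\<^sup>2"] cont2 by simp
  have "(pi/(2*B))\<^sup>2 * nn = integral {0..L} (\<lambda>x. (pi/(2*B))\<^sup>2 * integral {-B..B} (\<lambda>y. (U x y)\<^sup>2))"
    unfolding e1 by simp
  also have "\<dots> \<le> integral {0..L} (\<lambda>x. integral {-B..B} (\<lambda>y. (Uy x y)\<^sup>2))"
  proof (rule integral_le)
    show "(\<lambda>x. (pi/(2*B))\<^sup>2 * integral {-B..B} (\<lambda>y. (U x y)\<^sup>2)) integrable_on {0..L}"
      by (intro integrable_on_mult_right integrable_continuous_interval param_x) (rule cont2, simp)
    show "(\<lambda>x. integral {-B..B} (\<lambda>y. (Uy x y)\<^sup>2)) integrable_on {0..L}"
      by (intro integrable_continuous_interval param_x) (rule cont2, simp)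
    fix x assume x: "x \<in> {0..L}"
    have "B - - B = 2 * B" by simp
    then show "(pi/(2*B))\<^sup>2 * integral {-B..B} (\<lambda>y. (U x y)\<^sup>2) \<le> integral {-B..B} (\<lambda>y. (Uy x y)\<^sup>2)"
      using wirtinger[of "-B" B "\<lambda>s. U x s" "\<lambda>s. Uy x s"] B dy[OF x] slice_y[OF c_Uy x] bcy[OF x] by simp
  qed
  finally show ?thesis using e2 by simp
qed

end


context spat
begin

definition "FF y = integral {0..L} (\<lambda>s. \<bar>U s y * Ux s y\<bar>)"
definition "GG x = integral {-B..B} (\<lambda>s. \<bar>U x s * Uy x s\<bar>)"
definition "I1 = integral R (\<lambda>(x,y). \<bar>U x y * Ux x y\<bar>)"
definition "I2 = integral R (\<lambda>(x,y). \<bar>U x y * Uy x y\<bar>)"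

lemma cabs1: "continuous_on R (\<lambda>z. \<bar>U (fst z) (snd z) * Ux (fst z) (snd z)\<bar>)"
  by (intro continuous_intros cU)
lemma cabs2: "continuous_on R (\<lambda>z. \<bar>U (fst z) (snd z) * Uy (fst z) (snd z)\<bar>)"
  by (intro continuous_intros cU)

lemma pt1: "x \<in> {0..L} \<Longrightarrow> y \<in> {-B..B} \<Longrightarrow> (U x y)\<^sup>2 \<le> FF y"
  unfolding FF_def
  by (rule sq_le_absint[of 0 x L "\<lambda>s. U s y" "\<lambda>s. Ux s y"]) (use dx slice_x[OF c_Ux] bcx in auto)

lemma pt2: "x \<in> {0..L} \<Longrightarrow> y \<in> {-B..B} \<Longrightarrow> (U x y)\<^sup>2 \<le> GG x"
  unfolding GG_def
  by (rule sq_le_absint[of "-B" y B "\<lambda>s. U x s" "\<lambda>s. Uy x s"]) (use dy slice_y[OF c_Uy] bcy in auto)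

lemma cFF: "continuous_on {-B..B} FF"
  unfolding FF_def[abs_def] using param_y[OF cabs1] by simp
lemma cGG: "continuous_on {0..L} GG"
  unfolding GG_def[abs_def] using param_x[OF cabs2] by simp

lemma intFF: "integral {-B..B} FF = I1"
  unfolding I1_def FF_def[abs_def] using fub_y[of L B "\<lambda>x y. \<bar>U x y * Ux x y\<bar>"] cabs1 by simp
lemma intGG: "integral {0..L} GG = I2"
  unfolding I2_def GG_def[abs_def] using fub_x[of L B "\<lambda>x y. \<bar>U x y * Uy x y\<bar>"] cabs2 by simp

lemma QQ_le: "QQ \<le> I2 * I1"
proof -
  have c4: "continuous_on R (\<lambda>z. (U (fst z) (snd z))^4)" by (intro continuous_intros cU)
  have e: "QQ = integral {0..L} (\<lambda>x. integral {-B..B} (\<lambda>y. (U x y)^4))"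
    unfolding QQ_def using fub_x[of L B "\<lambda>x y. (U x y)^4"] c4 by simp
  have iF: "FF integrable_on {-B..B}" by (rule integrable_continuous_interval[OF cFF])
  have iG: "GG integrable_on {0..L}" by (rule integrable_continuous_interval[OF cGG])
  have "integral {0..L} (\<lambda>x. integral {-B..B} (\<lambda>y. (U x y)^4)) \<le> integral {0..L} (\<lambda>x. GG x * integral {-B..B} FF)"
  proof (rule integral_le)
    show "(\<lambda>x. integral {-B..B} (\<lambda>y. (U x y)^4)) integrable_on {0..L}"
      by (intro integrable_continuous_interval param_x c4)
    show "(\<lambda>x. GG x * integral {-B..B} FF) integrable_on {0..L}"
      using integrable_on_mult_right[OF iG, of "integral {-B..B} FF"] by (simp add: mult.commute)
    fix x assume x: "x \<in> {0..L}"
    have "integral {-B..B} (\<lambda>y. (U x y)^4) \<le> integral {-B..B} (\<lambda>y. GG x * FF y)"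
    proof (rule integral_le)
      show "(\<lambda>y. (U x y)^4) integrable_on {-B..B}"
        using x by (intro integrable_continuous_interval slice_y[OF c4, simplified]) auto
      show "(\<lambda>y. GG x * FF y) integrable_on {-B..B}" using iF by (rule integrable_on_mult_right)
      fix y assume y: "y \<in> {-B..B}"
      have "(U x y)^4 = (U x y)\<^sup>2 * (U x y)\<^sup>2" by (simp add: power4_eq_xxxx power2_eq_square)
      also have "\<dots> \<le> GG x * FF y"
        using pt1[OF x y] pt2[OF x y] zero_le_power2[of "U x y"] by (intro mult_mono) linarith+
      finally show "(U x y)^4 \<le> GG x * FF y" .
    qed
    then show "integral {-B..B} (\<lambda>y. (U x y)^4) \<le> GG x * integral {-B..B} FF" by simp
  qed
  also have "\<dots> = integral {0..L} GG * integral {-B..B} FF" by simp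
  finally show ?thesis using e intFF intGG by simp
qed

lemma I1_ge0: "0 \<le> I1" unfolding I1_def by (rule integral_nonneg[OF integ]) (auto intro!: continuous_intros cU)
lemma I2_ge0: "0 \<le> I2" unfolding I2_def by (rule integral_nonneg[OF integ]) (auto intro!: continuous_intros cU)

lemma I1_sq: "I1\<^sup>2 \<le> nn * aa"
proof (rule cs_aux[OF I1_ge0 nn_ge0 aa_ge0])
  fix l :: real assume l: "l > 0"
  have "I1 \<le> integral R (\<lambda>z. (l/2) * (\<lambda>(x,y). (U x y)\<^sup>2) z + (1/(2*l)) * (\<lambda>(x,y). (Ux x y)\<^sup>2) z)"
    unfolding I1_def
  proof (rule integral_le)
    show "(\<lambda>(x, y). \<bar>U x y * Ux x y\<bar>) integrable_on R" by (rule integ[OF cabs1])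
    show "(\<lambda>z. (l/2) * (\<lambda>(x,y). (U x y)\<^sup>2) z + (1/(2*l)) * (\<lambda>(x,y). (Ux x y)\<^sup>2) z) integrable_on R"
      by (intro integrable_add integrable_on_mult_right integ cont2) auto
    fix z assume "z \<in> R"
    show "(\<lambda>(x, y). \<bar>U x y * Ux x y\<bar>) z \<le> (l/2) * (\<lambda>(x,y). (U x y)\<^sup>2) z + (1/(2*l)) * (\<lambda>(x,y). (Ux x y)\<^sup>2) z"
      using abs_prod_le[OF l, of "U (fst z) (snd z)" "Ux (fst z) (snd z)"] by (auto simp: case_prod_beta field_simps)
  qed
  also have "\<dots> = (l/2) * nn + (1/(2*l)) * aa" unfolding nn_def aa_def
    by (rule int_lin2; rule integ; rule cont2) auto
  finally show "I1 \<le> (l * nn + aa / l) / 2" by (simp add: field_simps)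
qed

lemma I2_sq: "I2\<^sup>2 \<le> nn * bb"
proof (rule cs_aux[OF I2_ge0 nn_ge0 bb_ge0])
  fix l :: real assume l: "l > 0"
  have "I2 \<le> integral R (\<lambda>z. (l/2) * (\<lambda>(x,y). (U x y)\<^sup>2) z + (1/(2*l)) * (\<lambda>(x,y). (Uy x y)\<^sup>2) z)"
    unfolding I2_def
  proof (rule integral_le)
    show "(\<lambda>(x, y). \<bar>U x y * Uy x y\<bar>) integrable_on R" by (rule integ[OF cabs2])
    show "(\<lambda>z. (l/2) * (\<lambda>(x,y). (U x y)\<^sup>2) z + (1/(2*l)) * (\<lambda>(x,y). (Uy x y)\<^sup>2) z) integrable_on R"
      by (intro integrable_add integrable_on_mult_right integ cont2) auto
    fix z assume "z \<in> R"
    show "(\<lambda>(x, y). \<bar>U x y * Uy x y\<bar>) z \<le> (l/2) * (\<lambda>(x,y). (U x y)\<^sup>2) z + (1/(2*l)) * (\<lambda>(x,y). (Uy x y)\<^sup>2) z"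
      using abs_prod_le[OF l, of "U (fst z) (snd z)" "Uy (fst z) (snd z)"] by (auto simp: case_prod_beta field_simps)
  qed
  also have "\<dots> = (l/2) * nn + (1/(2*l)) * bb" unfolding nn_def bb_def
    by (rule int_lin2; rule integ; rule cont2) auto
  finally show "I2 \<le> (l * nn + bb / l) / 2" by (simp add: field_simps)
qed

lemma QQ_bound: "QQ \<le> nn * (aa + bb) / 2"
proof -
  have "(I2 * I1)\<^sup>2 = I1\<^sup>2 * I2\<^sup>2" by (simp add: power_mult_distrib)
  also have "\<dots> \<le> (nn * aa) * (nn * bb)"
    using I1_sq I2_sq nn_ge0 aa_ge0 bb_ge0 by (intro mult_mono mult_nonneg_nonneg) auto
  also have "\<dots> \<le> (nn * (aa + bb) / 2)\<^sup>2"
  proof -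
    have "4 * (aa * bb) \<le> (aa + bb)\<^sup>2" using sum_squares_bound[of aa bb]
      by (simp add: power2_eq_square algebra_simps)
    then have "nn\<^sup>2 * (4 * (aa * bb)) \<le> nn\<^sup>2 * (aa + bb)\<^sup>2" by (intro mult_left_mono) auto
    then show ?thesis by (simp add: power2_eq_square field_simps)
  qed
  finally have "(I2 * I1)\<^sup>2 \<le> (nn * (aa + bb) / 2)\<^sup>2" .
  moreover have "0 \<le> nn * (aa + bb) / 2" using nn_ge0 aa_ge0 bb_ge0 by simp
  ultimately have "I2 * I1 \<le> nn * (aa + bb) / 2" by (rule power2_le_imp_le)
  then show ?thesis using QQ_le by simp
qed

end


lemma box_pair_real: "(x, y) \<in> box (a::real, c::real) (b, d) \<longleftrightarrow> a < x \<and> x < b \<and> c < y \<and> y < d"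
  by (auto simp: mem_box Basis_prod_def inner_prod_def)

lemma spike_R:
  fixes f g :: "real \<Rightarrow> real \<Rightarrow> real"
  assumes "\<And>x y. 0 < x \<Longrightarrow> x < L \<Longrightarrow> -B < y \<Longrightarrow> y < B \<Longrightarrow> f x y = g x y"
  shows "integral ({0..L} \<times> {-B..B}) (\<lambda>(x,y). f x y) = integral ({0..L} \<times> {-B..B}) (\<lambda>(x,y). g x y)"
  unfolding rect_cbox
proof (rule integral_spike[OF negligible_frontier_interval])
  fix z assume "z \<in> cbox (0, - B) (L, B) - (cbox (0, - B) (L, B) - box (0, - B) (L, B))"
  then have "z \<in> box (0, - B) (L, B)" by blast
  then show "(\<lambda>(x,y). g x y) z = (\<lambda>(x,y). f x y) z"
    using assms by (cases z) (auto simp: box_pair_real)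
qed

lemma cont_tq:
  assumes "continuous_on (spacetime L B) (jointly f)"
  shows "continuous_on ({0..} \<times> ({0..L} \<times> {-B..B})) (\<lambda>q. f (fst (snd q)) (snd (snd q)) (fst q))"
proof -
  have "continuous_on ({0..} \<times> ({0..L} \<times> {-B..B})) (\<lambda>q. jointly f (fst (snd q), snd (snd q), fst q))"
    by (rule continuous_on_compose2[OF assms]) (auto intro!: continuous_intros simp: spacetime_def)
  then show ?thesis by (simp add: jointly_def)
qed

lemma cont_slice_t:
  assumes "continuous_on (spacetime L B) (jointly f)" "t \<ge> 0"
  shows "continuous_on ({0..L} \<times> {-B..B}) (\<lambda>z. f (fst z) (snd z) t)"
proof -
  have "continuous_on ({0..L} \<times> {-B..B}) (\<lambda>z. jointly f (fst z, snd z, t))"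
    by (rule continuous_on_compose2[OF assms(1)]) (use assms(2) in \<open>auto intro!: continuous_intros simp: spacetime_def\<close>)
  then show ?thesis by (simp add: jointly_def)
qed

lemma time_deriv:
  fixes w :: "real \<Rightarrow> real" and u ut :: "real \<Rightarrow> real \<Rightarrow> real \<Rightarrow> real"
  assumes cw: "continuous_on UNIV w"
    and cu: "continuous_on (spacetime L B) (jointly u)" and cut: "continuous_on (spacetime L B) (jointly ut)"
    and du: "\<And>x y t. (x,y,t) \<in> spacetime L B \<Longrightarrow> ((\<lambda>s. u x y s) has_real_derivative ut x y t) (at t within {0..})"
    and t: "t \<ge> 0"
  shows "((\<lambda>t. integral ({0..L}\<times>{-B..B}) (\<lambda>(x,y). w x * (u x y t)\<^sup>2)) has_real_derivative
           integral ({0..L}\<times>{-B..B}) (\<lambda>(x,y). w x * (2 * u x y t * ut x y t))) (at t within {0..})"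
proof -
  have cwc: "continuous_on S (\<lambda>x. w (h x))" if "continuous_on S h" for S and h :: "'z::topological_space \<Rightarrow> real"
    by (rule continuous_on_compose2[OF cw that]) auto
  have "((\<lambda>t. integral (cbox (0,-B) (L,B)) (\<lambda>p. w (fst p) * (u (fst p) (snd p) t)\<^sup>2)) has_field_derivative
           integral (cbox (0,-B) (L,B)) (\<lambda>p. w (fst p) * (2 * u (fst p) (snd p) t * ut (fst p) (snd p) t))) (at t within {0..})"
  proof (rule leibniz_rule_field_derivative[where fx="\<lambda>t p. w (fst p) * (2 * u (fst p) (snd p) t * ut (fst p) (snd p) t)"])
    fix s :: real and p :: "real \<times> real" assume s: "s \<in> {0..}" and p: "p \<in> cbox (0,-B) (L,B)"
    have "(fst p, snd p, s) \<in> spacetime L B" using s p by (auto simp: spacetime_def rect_cbox[symmetric])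
    from du[OF this] show "((\<lambda>s. w (fst p) * (u (fst p) (snd p) s)\<^sup>2) has_field_derivative
        w (fst p) * (2 * u (fst p) (snd p) s * ut (fst p) (snd p) s)) (at s within {0..})"
      by (auto intro!: derivative_eq_intros)
  next
    fix s :: real assume s: "s \<in> {0..}"
    have "continuous_on (cbox (0,-B) (L,B)) (\<lambda>p. w (fst p) * (u (fst p) (snd p) s)\<^sup>2)"
      unfolding rect_cbox[symmetric]
      by (intro continuous_intros cont_slice_t[OF cu] cwc) (use s in auto)
    then show "(\<lambda>p. w (fst p) * (u (fst p) (snd p) s)\<^sup>2) integrable_on cbox (0,-B) (L,B)"
      by (rule integrable_continuous)
  next
    show "continuous_on ({0..} \<times> cbox (0,-B) (L,B)) (\<lambda>(t, p). w (fst p) * (2 * u (fst p) (snd p) t * ut (fst p) (snd p) t))"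
      unfolding rect_cbox[symmetric] case_prod_beta'
      by (intro continuous_intros cont_tq[OF cu] cont_tq[OF cut] cwc)
  qed (use t in auto)
  then show ?thesis by (simp add: rect_cbox case_prod_beta')
qed

lemma decay:
  fixes f f' :: "real \<Rightarrow> real" and c t :: real
  assumes cont: "continuous_on {0..} f"
    and der: "\<And>t. t > 0 \<Longrightarrow> (f has_real_derivative f' t) (at t)"
    and ineq: "\<And>t. t > 0 \<Longrightarrow> f' t \<le> - c * f t"
    and t: "t \<ge> 0"
  shows "f t \<le> exp (- c * t) * f 0"
proof (cases "t = 0")
  case True then show ?thesis by simp
next
  case False
  then have t0: "0 < t" using t by simp
  define g where "g s = exp (c * s) * f s" for s
  have cg: "continuous_on {0..t} g" unfolding g_def
    by (intro continuous_intros continuous_on_subset[OF cont]) auto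
  have dg: "(g has_real_derivative exp (c * s) * (c * f s + f' s)) (at s)" if "s > 0" for s
    unfolding g_def[abs_def] using der[OF that]
    by (auto intro!: derivative_eq_intros simp: algebra_simps)
  obtain l z where z: "0 < z" "z < t" "(g has_real_derivative l) (at z)" "g t - g 0 = (t - 0) * l"
    using MVT[OF t0 cg] dg by (meson real_differentiable_def)
  have "l = exp (c * z) * (c * f z + f' z)" using DERIV_unique[OF z(3) dg[OF z(1)]] .
  moreover have "c * f z + f' z \<le> 0" using ineq[OF z(1)] by simp
  ultimately have "l \<le> 0" by (simp add: mult_nonneg_nonpos)
  then have "t * l \<le> 0" using t0 by (simp add: mult_nonneg_nonpos)
  then have "g t \<le> g 0" using z(4) by simp
  then have "exp (c * t) * f t \<le> f 0" by (simp add: g_def)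
  then have "exp (- c * t) * (exp (c * t) * f t) \<le> exp (- c * t) * f 0" by (intro mult_left_mono) auto
  then show ?thesis by (simp add: exp_minus field_simps)
qed



lemma div4: "x \<le> 4 * a \<Longrightarrow> x / 4 \<le> (a::real)" by simp

lemma arith_final:
  fixes L B A M nn aa bb bd QQ W :: real
  assumes L: "L > 0" and B: "B > 0" and hA: "2 * A\<^sup>2 = pi\<^sup>2 * (3 / L\<^sup>2 + 1 / (4 * B\<^sup>2)) - 1"
    and hA0: "2 * A\<^sup>2 > 0"
    and hM: "M < A\<^sup>2 / (2 * pi\<^sup>2 * (1 / L\<^sup>2 + 1 / (4 * B\<^sup>2)))"
    and n0: "0 \<le> nn" and nM: "nn \<le> M" and a0: "0 \<le> aa" and b0: "0 \<le> bb" and bd0: "0 \<le> bd"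
    and px: "(pi/L)\<^sup>2 * nn \<le> aa" and py: "(pi/(2*B))\<^sup>2 * nn \<le> bb"
    and Q: "QQ \<le> nn * (aa + bb) / 2" and W: "W \<le> (1 + L) * nn"
  shows "nn + QQ/2 - bd - 3*aa - bb \<le> -(A\<^sup>2/(1+L)) * W"
proof -
  define s where "s = pi\<^sup>2 * (1 / L\<^sup>2 + 1 / (4 * B\<^sup>2))"
  have s0: "s > 0" unfolding s_def using L B by (intro mult_pos_pos add_pos_pos) auto
  have k: "1 + 2 * A\<^sup>2 = pi\<^sup>2 * (3 / L\<^sup>2 + 1 / (4 * B\<^sup>2))" using hA by simp
  have k3: "1 + 2 * A\<^sup>2 \<le> 3 * s"
  proof -
    have "3 * s - pi\<^sup>2 * (3 / L\<^sup>2 + 1 / (4 * B\<^sup>2)) = pi\<^sup>2 * (1 / (2 * B\<^sup>2))"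
      unfolding s_def using B by (simp add: field_simps)
    moreover have "0 \<le> pi\<^sup>2 * (1 / (2 * B\<^sup>2))" by simp
    ultimately show ?thesis using k by linarith
  qed
  have M0: "0 \<le> M" using n0 nM by simp
  have Ms: "M * (2 * s) < A\<^sup>2" using hM s0 unfolding s_def by (simp add: pos_less_divide_eq mult.commute mult.left_commute)
  have key: "M * (1 + 2 * A\<^sup>2) \<le> 4 * A\<^sup>2"
  proof -
    have "M * (1 + 2 * A\<^sup>2) \<le> M * (3 * s)" using k3 M0 by (rule mult_left_mono)
    also have "\<dots> = 3/2 * (M * (2 * s))" by simp
    also have "\<dots> \<le> 3/2 * A\<^sup>2" using Ms by simp
    finally have X: "M * (1 + 2 * A\<^sup>2) \<le> 3/2 * A\<^sup>2" .
    show ?thesis using X zero_le_power2[of A] by linarith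
  qed
  have keyA: "M * (1 + 2 * A\<^sup>2) / 4 \<le> A\<^sup>2"
    using div4[OF key] .
  have M4: "M/4 \<le> 1"
  proof -
    have "4 * A\<^sup>2 \<le> 4 * (1 + 2 * A\<^sup>2)" using zero_le_power2[of A] by simp
    then have "M * (1 + 2 * A\<^sup>2) \<le> 4 * (1 + 2 * A\<^sup>2)" using key by linarith
    then have "M \<le> 4" by (rule mult_right_le_imp_le) (use zero_le_power2[of A] in linarith)
    then show ?thesis by simp
  qed
  define P where "P = 3 * aa + bb"
  have PL: "(1 + 2 * A\<^sup>2) * nn \<le> P"
  proof -
    have "(1 + 2 * A\<^sup>2) * nn = 3 * ((pi/L)\<^sup>2 * nn) + (pi/(2*B))\<^sup>2 * nn"
      unfolding k by (simp add: power_divide power_mult_distrib algebra_simps)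
    then show ?thesis using px py unfolding P_def by linarith
  qed
  have QP: "QQ / 2 \<le> M * P / 4"
  proof -
    have "nn * (aa + bb) \<le> M * (aa + bb)" using nM a0 b0 by (intro mult_right_mono) auto
    also have "\<dots> \<le> M * P" unfolding P_def using M0 a0 by (intro mult_left_mono) auto
    finally show ?thesis using Q by simp
  qed
  have "nn + QQ/2 - bd - 3*aa - bb \<le> nn - (1 - M/4) * P" using QP bd0 unfolding P_def by (simp add: algebra_simps)
  also have "\<dots> \<le> nn - (1 - M/4) * ((1 + 2 * A\<^sup>2) * nn)"
    using PL M4 by (simp add: mult_left_mono)
  also have "\<dots> = nn * (M * (1 + 2 * A\<^sup>2) / 4 - 2 * A\<^sup>2)" by (simp add: algebra_simps)
  also have "\<dots> \<le> nn * (- A\<^sup>2)" using keyA n0 by (intro mult_left_mono) auto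
  also have "\<dots> \<le> -(A\<^sup>2/(1+L)) * W"
  proof -
    have "(A\<^sup>2/(1+L)) * W \<le> (A\<^sup>2/(1+L)) * ((1 + L) * nn)" using W L by (intro mult_left_mono) auto
    also have "\<dots> = A\<^sup>2 * nn" using L by (simp add: field_simps)
    finally show ?thesis by (simp add: mult.commute)
  qed
  finally show ?thesis .
qed



lemma norm_cmp:
  fixes g :: "real \<Rightarrow> real \<Rightarrow> real"
  assumes L: "L > 0" and c: "continuous_on ({0..L} \<times> {-B..B}) (\<lambda>z. g (fst z) (snd z))"
  shows "integral ({0..L} \<times> {-B..B}) (\<lambda>(x,y). (g x y)\<^sup>2) \<le> integral ({0..L} \<times> {-B..B}) (\<lambda>(x,y). (1+x) * (g x y)\<^sup>2)"
    and "integral ({0..L} \<times> {-B..B}) (\<lambda>(x,y). (1+x) * (g x y)\<^sup>2) \<le> (1+L) * integral ({0..L} \<times> {-B..B}) (\<lambda>(x,y). (g x y)\<^sup>2)"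
proof -
  have i1: "(\<lambda>(x,y). (g x y)\<^sup>2) integrable_on ({0..L} \<times> {-B..B})"
    by (rule rect_integrable) (simp add: case_prod_beta'; intro continuous_intros c)
  have i2: "(\<lambda>(x,y). (1+x) * (g x y)\<^sup>2) integrable_on ({0..L} \<times> {-B..B})"
    by (rule rect_integrable) (simp add: case_prod_beta'; intro continuous_intros c)
  show "integral ({0..L} \<times> {-B..B}) (\<lambda>(x,y). (g x y)\<^sup>2) \<le> integral ({0..L} \<times> {-B..B}) (\<lambda>(x,y). (1+x) * (g x y)\<^sup>2)"
  proof (rule integral_le[OF i1 i2])
    fix z assume z: "z \<in> {0..L} \<times> {-B..B}"
    then have "0 \<le> fst z" by auto
    then have "1 * (g (fst z) (snd z))\<^sup>2 \<le> (1 + fst z) * (g (fst z) (snd z))\<^sup>2"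
      by (intro mult_right_mono) auto
    then show "(\<lambda>(x,y). (g x y)\<^sup>2) z \<le> (\<lambda>(x,y). (1+x) * (g x y)\<^sup>2) z" by (simp add: case_prod_beta)
  qed
  have "integral ({0..L} \<times> {-B..B}) (\<lambda>(x,y). (1+x) * (g x y)\<^sup>2) \<le> integral ({0..L} \<times> {-B..B}) (\<lambda>z. (1+L) * (\<lambda>(x,y). (g x y)\<^sup>2) z)"
  proof (rule integral_le[OF i2 integrable_on_mult_right[OF i1]])
    fix z assume z: "z \<in> {0..L} \<times> {-B..B}"
    then have "fst z \<le> L" by auto
    then have "(1 + fst z) * (g (fst z) (snd z))\<^sup>2 \<le> (1 + L) * (g (fst z) (snd z))\<^sup>2"
      by (intro mult_right_mono) auto
    then show "(\<lambda>(x,y). (1+x) * (g x y)\<^sup>2) z \<le> (1+L) * (\<lambda>(x,y). (g x y)\<^sup>2) z" by (simp add: case_prod_beta)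
  qed
  then show "integral ({0..L} \<times> {-B..B}) (\<lambda>(x,y). (1+x) * (g x y)\<^sup>2) \<le> (1+L) * integral ({0..L} \<times> {-B..B}) (\<lambda>(x,y). (g x y)\<^sup>2)"
    by simp
qed

theorem theorem5p1:
  fixes L B A :: real
    and u :: "real \<Rightarrow> real \<Rightarrow> real \<Rightarrow> real"
    and u0 :: "real \<Rightarrow> real \<Rightarrow> real"
  assumes "L > 0" and "B > 0"
    and "2 * A\<^sup>2 = pi\<^sup>2 * (3 / L\<^sup>2 + 1 / (4 * B\<^sup>2)) - 1"
    and "2 * A\<^sup>2 > 0"
    and "sqnorm L B u0 < A\<^sup>2 / (2 * pi\<^sup>2 * (1 / L\<^sup>2 + 1 / (4 * B\<^sup>2)))"
    and "mzk_solution L B u u0"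
  shows "\<forall>t\<ge>0. sqnorm L B (\<lambda>x y. u x y t) \<le> wnorm L B (\<lambda>x y. u x y t) \<and>
                wnorm L B (\<lambda>x y. u x y t) \<le> exp (- (A\<^sup>2 / (1 + L)) * t) * wnorm L B u0"
proof -
  note L = assms(1) and B = assms(2) and hA = assms(3) and hA0 = assms(4) and hM = assms(5)
  from assms(6)[unfolded mzk_solution_def] obtain ux uxx uxxx uy uyy uxy uxyy ut :: "real \<Rightarrow> real \<Rightarrow> real \<Rightarrow> real"
    where C: "\<forall>f \<in> {u, ux, uxx, uxxx, uy, uyy, uxy, uxyy, ut}. continuous_on (spacetime L B) (jointly f)"
      and D: "\<forall>x y t. (x, y, t) \<in> spacetime L B \<longrightarrow>
         ((\<lambda>s. u s y t) has_real_derivative ux x y t) (at x within {0..L}) \<and>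
         ((\<lambda>s. ux s y t) has_real_derivative uxx x y t) (at x within {0..L}) \<and>
         ((\<lambda>s. uxx s y t) has_real_derivative uxxx x y t) (at x within {0..L}) \<and>
         ((\<lambda>s. u x s t) has_real_derivative uy x y t) (at y within {-B..B}) \<and>
         ((\<lambda>s. uy x s t) has_real_derivative uyy x y t) (at y within {-B..B}) \<and>
         ((\<lambda>s. ux x s t) has_real_derivative uxy x y t) (at y within {-B..B}) \<and>
         ((\<lambda>s. uy s y t) has_real_derivative uxy x y t) (at x within {0..L}) \<and>
         ((\<lambda>s. uyy s y t) has_real_derivative uxyy x y t) (at x within {0..L}) \<and>
         ((\<lambda>s. u x y s) has_real_derivative ut x y t) (at t within {0..})"
      and EQ: "\<forall>x y t. 0 < x \<and> x < L \<and> -B < y \<and> y < B \<and> 0 < t \<longrightarrow>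
         ut x y t + ux x y t + (u x y t)\<^sup>2 * ux x y t + uxxx x y t + uxyy x y t = 0"
      and BCy: "\<forall>x t. 0 \<le> x \<and> x \<le> L \<and> 0 \<le> t \<longrightarrow> u x (-B) t = 0 \<and> u x B t = 0"
      and BCx: "\<forall>y t. -B \<le> y \<and> y \<le> B \<and> 0 \<le> t \<longrightarrow> u 0 y t = 0 \<and> u L y t = 0 \<and> ux L y t = 0"
      and IC: "\<forall>x y. 0 \<le> x \<and> x \<le> L \<and> -B \<le> y \<and> y \<le> B \<longrightarrow> u x y 0 = u0 x y"
    apply (elim exE conjE)
    apply (rule that)
         apply assumption+
    done
  have cu: "continuous_on (spacetime L B) (jointly u)" and cux: "continuous_on (spacetime L B) (jointly ux)"
    and cuxx: "continuous_on (spacetime L B) (jointly uxx)" and cuxxx: "continuous_on (spacetime L B) (jointly uxxx)"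
    and cuy: "continuous_on (spacetime L B) (jointly uy)" and cuyy: "continuous_on (spacetime L B) (jointly uyy)"
    and cuxy: "continuous_on (spacetime L B) (jointly uxy)" and cuxyy: "continuous_on (spacetime L B) (jointly uxyy)"
    and cut: "continuous_on (spacetime L B) (jointly ut)"
    using C by simp_all
  have mem: "(x, y, t) \<in> spacetime L B" if "x \<in> {0..L}" "y \<in> {-B..B}" "t \<ge> 0" for x y t
    using that by (simp add: spacetime_def)
  have SP: "spat L B (\<lambda>x y. u x y t) (\<lambda>x y. ux x y t) (\<lambda>x y. uxx x y t) (\<lambda>x y. uxxx x y t)
      (\<lambda>x y. uy x y t) (\<lambda>x y. uyy x y t) (\<lambda>x y. uxy x y t) (\<lambda>x y. uxyy x y t)" if t: "t \<ge> 0" for t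
  proof (unfold_locales)
    show "0 < L" "0 < B" using L B by auto
  next
    fix V assume "V \<in> {\<lambda>x y. u x y t, \<lambda>x y. ux x y t, \<lambda>x y. uxx x y t, \<lambda>x y. uxxx x y t,
      \<lambda>x y. uy x y t, \<lambda>x y. uyy x y t, \<lambda>x y. uxy x y t, \<lambda>x y. uxyy x y t}"
    then show "continuous_on ({0..L} \<times> {-B..B}) (\<lambda>z. V (fst z) (snd z))"
      using cont_slice_t[OF cu t] cont_slice_t[OF cux t] cont_slice_t[OF cuxx t] cont_slice_t[OF cuxxx t]
        cont_slice_t[OF cuy t] cont_slice_t[OF cuyy t] cont_slice_t[OF cuxy t] cont_slice_t[OF cuxyy t]
      by auto
  qed (use D mem t BCy BCx in \<open>auto\<close>)
  define Nt where "Nt t = sqnorm L B (\<lambda>x y. u x y t)" for t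
  define Wt where "Wt t = wnorm L B (\<lambda>x y. u x y t)" for t
  have Nt_eq: "Nt = (\<lambda>t. integral ({0..L}\<times>{-B..B}) (\<lambda>(x,y). (\<lambda>x. 1) x * (u x y t)\<^sup>2))"
    by (simp add: Nt_def sqnorm_def fun_eq_iff)
  have Wt_eq: "Wt = (\<lambda>t. integral ({0..L}\<times>{-B..B}) (\<lambda>(x,y). (\<lambda>x. 1 + x) x * (u x y t)\<^sup>2))"
    by (simp add: Wt_def wnorm_def fun_eq_iff)
  have du: "\<And>x y t. (x,y,t) \<in> spacetime L B \<Longrightarrow> ((\<lambda>s. u x y s) has_real_derivative ut x y t) (at t within {0..})"
    using D by blast
  have dN: "(Nt has_real_derivative integral ({0..L}\<times>{-B..B}) (\<lambda>(x,y). (\<lambda>x. 1) x * (2 * u x y t * ut x y t))) (at t within {0..})"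
    if "t \<ge> 0" for t
    unfolding Nt_eq by (rule time_deriv[OF _ cu cut du that]) (intro continuous_intros)
  have dW: "(Wt has_real_derivative integral ({0..L}\<times>{-B..B}) (\<lambda>(x,y). (\<lambda>x. 1 + x) x * (2 * u x y t * ut x y t))) (at t within {0..})"
    if "t \<ge> 0" for t
    unfolding Wt_eq by (rule time_deriv[OF _ cu cut du that]) (intro continuous_intros)
  have contN: "continuous_on {0..} Nt" by (rule deriv_cont_on) (use dN in auto)
  have contW: "continuous_on {0..} Wt" by (rule deriv_cont_on) (use dW in auto)
  have atw: "at t within {0..} = at t" if "t > 0" for t :: real
    using that by (intro at_within_interior) simp
  have N0: "Nt 0 = sqnorm L B u0"
    unfolding Nt_def sqnorm_def by (rule integral_cong) (use IC in auto)
  have W0: "Wt 0 = wnorm L B u0"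
    unfolding Wt_def wnorm_def by (rule integral_cong) (use IC in auto)
  have cmp: "Nt t \<le> Wt t" "Wt t \<le> (1 + L) * Nt t" if "t \<ge> 0" for t
    using norm_cmp[OF L cont_slice_t[OF cu that]] unfolding Nt_def Wt_def sqnorm_def wnorm_def by simp_all
  have ut_eq: "ut x y s = - (ux x y s + (u x y s)\<^sup>2 * ux x y s + uxxx x y s + uxyy x y s)"
    if "0 < x" "x < L" "-B < y" "y < B" "0 < s" for x y s
    using EQ that by (smt (verit))
  have Nbound: "Nt t \<le> Nt 0" if t: "t \<ge> 0" for t
  proof -
    have "Nt t \<le> exp (- 0 * t) * Nt 0"
    proof (rule decay[where f' = "\<lambda>t. integral ({0..L}\<times>{-B..B}) (\<lambda>(x,y). (\<lambda>x. 1) x * (2 * u x y t * ut x y t))" and c = 0])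
      show "continuous_on {0..} Nt" by (rule contN)
      show "0 \<le> t" by (rule t)
    next
      fix s :: real assume s: "s > 0"
      show "(Nt has_real_derivative integral ({0..L}\<times>{-B..B}) (\<lambda>(x,y). (\<lambda>x. 1) x * (2 * u x y s * ut x y s))) (at s)"
        using dN[of s] s atw[OF s] by simp
    next
      fix s :: real assume s: "s > 0"
      interpret S: spat L B "\<lambda>x y. u x y s" "\<lambda>x y. ux x y s" "\<lambda>x y. uxx x y s" "\<lambda>x y. uxxx x y s"
        "\<lambda>x y. uy x y s" "\<lambda>x y. uyy x y s" "\<lambda>x y. uxy x y s" "\<lambda>x y. uxyy x y s"
        using SP[of s] s by simp
      have "integral ({0..L}\<times>{-B..B}) (\<lambda>(x,y). (\<lambda>x. 1) x * (2 * u x y s * ut x y s))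
          = integral ({0..L}\<times>{-B..B}) (\<lambda>(x,y). - (2 * u x y s * S.E x y))"
        by (rule spike_R) (simp add: ut_eq s S.E_def algebra_simps)
      also have "\<dots> = integral ({0..L}\<times>{-B..B}) (\<lambda>z. - (\<lambda>(x,y). 2 * u x y s * S.E x y) z)"
        by (simp add: case_prod_beta')
      also have "\<dots> = - S.bd" using S.ident_0 by (simp only: integral_neg)
      finally show "integral ({0..L}\<times>{-B..B}) (\<lambda>(x,y). (\<lambda>x. 1) x * (2 * u x y s * ut x y s)) \<le> - 0 * Nt s"
        using S.bd_ge0 by simp
    qed
    then show ?thesis by simp
  qed
  have Wdecay: "Wt t \<le> exp (- (A\<^sup>2 / (1 + L)) * t) * Wt 0" if t: "t \<ge> 0" for t
  proof (rule decay[where f' = "\<lambda>t. integral ({0..L}\<times>{-B..B}) (\<lambda>(x,y). (\<lambda>x. 1 + x) x * (2 * u x y t * ut x y t))"])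
    show "continuous_on {0..} Wt" by (rule contW)
    show "0 \<le> t" by (rule t)
  next
    fix s :: real assume s: "s > 0"
    show "(Wt has_real_derivative integral ({0..L}\<times>{-B..B}) (\<lambda>(x,y). (\<lambda>x. 1 + x) x * (2 * u x y s * ut x y s))) (at s)"
      using dW[of s] s atw[OF s] by simp
  next
    fix s :: real assume s: "s > 0"
    interpret S: spat L B "\<lambda>x y. u x y s" "\<lambda>x y. ux x y s" "\<lambda>x y. uxx x y s" "\<lambda>x y. uxxx x y s"
      "\<lambda>x y. uy x y s" "\<lambda>x y. uyy x y s" "\<lambda>x y. uxy x y s" "\<lambda>x y. uxyy x y s"
      using SP[of s] s by simp
    have nnN: "S.nn = Nt s" unfolding S.nn_def Nt_def sqnorm_def by simp
    have "integral ({0..L}\<times>{-B..B}) (\<lambda>(x,y). (\<lambda>x. 1 + x) x * (2 * u x y s * ut x y s))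
        = integral ({0..L}\<times>{-B..B}) (\<lambda>(x,y). - (2 * (1 + x) * u x y s * S.E x y))"
      by (rule spike_R) (simp add: ut_eq s S.E_def algebra_simps)
    also have "\<dots> = integral ({0..L}\<times>{-B..B}) (\<lambda>z. - (\<lambda>(x,y). 2 * (1 + x) * u x y s * S.E x y) z)"
      by (simp add: case_prod_beta')
    also have "\<dots> = - (S.bd + 3 * S.aa + S.bb - S.nn - S.QQ / 2)" using S.ident_w by (simp only: integral_neg)
    also have "\<dots> = S.nn + S.QQ/2 - S.bd - 3 * S.aa - S.bb" by simp
    also have "\<dots> \<le> - (A\<^sup>2 / (1 + L)) * Wt s"
    proof (rule arith_final[OF L B hA hA0 hM S.nn_ge0 _ S.aa_ge0 S.bb_ge0 S.bd_ge0 S.poinc_x S.poinc_y S.QQ_bound])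
      show "S.nn \<le> sqnorm L B u0" using Nbound[of s] s N0 nnN by simp
      show "Wt s \<le> (1 + L) * S.nn" using cmp(2)[of s] s nnN by simp
    qed
    finally show "integral ({0..L}\<times>{-B..B}) (\<lambda>(x,y). (\<lambda>x. 1 + x) x * (2 * u x y s * ut x y s)) \<le> - (A\<^sup>2 / (1 + L)) * Wt s" .
  qed
  show ?thesis
  proof (intro allI impI conjI)
    fix t :: real assume t: "0 \<le> t"
    show "sqnorm L B (\<lambda>x y. u x y t) \<le> wnorm L B (\<lambda>x y. u x y t)" using cmp(1)[OF t] by (simp add: Nt_def Wt_def)
    show "wnorm L B (\<lambda>x y. u x y t) \<le> exp (- (A\<^sup>2 / (1 + L)) * t) * wnorm L B u0"
      using Wdecay[OF t] W0 by (simp add: Wt_def)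
  qed
qed


end
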